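(* Let $\mathbf{P}=\{p_n(x)\}_{n\ge0}$ be a sequence of complex polynomials with $\deg p_n=n$, $p_0=1$, and $p_n(0)=0$ for all $n\ge1$. Then for $n\ge1$ and $1\le k\le n$, $$S_2(n,k;\mathbf{P})=\frac{1}{k!}\sum_{j=1}^{k}\binom{n-j}{k-j}A_{n,j-1}(\mathbf{P}).$$
   Context: $S_2(n,k;\mathbf{P})$ is defined by $p_n(x)=\sum_{k=0}^{n}S_2(n,k;\mathbf{P})(x)_k$, with $(x)_0=1$, $(x)_k=x(x-1)\cdots(x-k+1)$. The Eulerian numbers $A_{n,k}(\mathbf{P})$ ($0\le k\le n$) are the unique coefficients with $p_n(x)=\sum_{k=0}^{n}A_{n,k}(\mathbf{P})\binom{x+n-k-1}{n}$, where $\binom{y}{n}=y(y-1)\cdots(y-n+1)/n!$. *)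

theory Defs
  imports "HOL-Computational_Algebra.Polynomial"
begin

definition falling_poly :: "nat \<Rightarrow> complex poly" where
  "falling_poly k = (\<Prod>i<k. [:- of_nat i, 1:])"

text \<open>The binomial polynomial binom(x+n-k-1, n) = (x+n-k-1)(x+n-k-2)...(x-k)/n!.\<close>
definition binom_poly :: "nat \<Rightarrow> nat \<Rightarrow> complex poly" where
  "binom_poly n k = smult (1 / fact n)
     (\<Prod>i<n. [: of_int (int n - int k - 1 - int i), 1 :])"

definition S2 :: "(nat \<Rightarrow> complex poly) \<Rightarrow> nat \<Rightarrow> nat \<Rightarrow> complex" where
  "S2 P n = (THE c. (\<forall>k>n. c k = 0) \<and>
                    P n = (\<Sum>k\<le>n. smult (c k) (falling_poly k)))"

definition eulerA :: "(nat \<Rightarrow> complex poly) \<Rightarrow> nat \<Rightarrow> nat \<Rightarrow> complex" where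
  "eulerA P n = (THE c. (\<forall>k>n. c k = 0) \<and>
                    P n = (\<Sum>k\<le>n. smult (c k) (binom_poly n k)))"

end

theory Submission
  imports Defs "HOL-Computational_Algebra.Formal_Power_Series"
begin

lemma poly_falling: "poly (falling_poly k) x = fact k * (x gchoose k)"
  unfolding falling_poly_def gbinomial_mult_fact
  by (simp add: poly_prod lessThan_atLeast0)

lemma poly_binom: "poly (binom_poly n k) x = (x + of_int (int n - int k - 1)) gchoose n"
proof -
  have "poly (binom_poly n k) x = (1 / fact n) * (\<Prod>i<n. x + of_int (int n - int k - 1) - of_nat i)"
    unfolding binom_poly_def by (simp add: poly_prod algebra_simps)
  also have "\<dots> = (1 / fact n) * (fact n * ((x + of_int (int n - int k - 1)) gchoose n))"
    unfolding gbinomial_mult_fact by (simp add: lessThan_atLeast0)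
  finally show ?thesis by simp
qed

lemma triangular:
  fixes c :: "nat \<Rightarrow> complex"
  assumes "\<And>i. i \<le> n \<Longrightarrow> (\<Sum>k\<le>n. c k * v i k) = 0"
    and "\<And>i k. i \<le> n \<Longrightarrow> k \<le> n \<Longrightarrow> i < k \<Longrightarrow> v i k = 0"
    and "\<And>i. i \<le> n \<Longrightarrow> v i i \<noteq> 0"
  shows "\<And>i. i \<le> n \<Longrightarrow> c i = 0"
proof -
  fix i show "i \<le> n \<Longrightarrow> c i = 0"
  proof (induction i rule: less_induct)
    case (less i)
    have "(\<Sum>k\<le>n. c k * v i k) = (\<Sum>k\<in>{i}. c k * v i k)"
    proof (rule sum.mono_neutral_right)
      show "\<forall>k\<in>{..n} - {i}. c k * v i k = 0"
        using less assms(2) by (metis DiffE insertI1 atMost_iff linorder_neqE_nat mult_eq_0_iff order.strict_trans1 order_less_imp_le singleton_iff)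
    qed (use less in auto)
    then have "c i * v i i = 0" using assms(1)[OF less(2)] by simp
    then show ?case using assms(3)[OF less(2)] by simp
  qed
qed

lemma falling_unique:
  fixes c :: "nat \<Rightarrow> complex"
  assumes "(\<Sum>k\<le>n. smult (c k) (falling_poly k)) = 0" and "i \<le> n"
  shows "c i = 0"
proof (rule triangular[where v = "\<lambda>i k. fact k * of_nat (i choose k)"])
  fix i assume "i \<le> n"
  have "poly (\<Sum>k\<le>n. smult (c k) (falling_poly k)) (of_nat i) = 0" using assms by simp
  then show "(\<Sum>k\<le>n. c k * (fact k * of_nat (i choose k))) = 0"
    by (simp add: poly_sum poly_falling binomial_gbinomial)
qed (use assms in \<open>auto simp: binomial_eq_0\<close>)

lemma binom_eval:
  assumes "k \<le> n"
  shows "poly (binom_poly n k) (of_nat (i+1)) = of_nat ((n + i - k) choose n)"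
proof -
  have "(of_nat (i+1) :: complex) + of_int (int n - int k - 1) = of_nat (n + i - k)"
    using assms by (simp add: of_nat_diff)
  then show ?thesis by (simp add: poly_binom binomial_gbinomial)
qed

lemma binom_unique:
  fixes c :: "nat \<Rightarrow> complex"
  assumes "(\<Sum>k\<le>n. smult (c k) (binom_poly n k)) = 0" and "i \<le> n"
  shows "c i = 0"
proof (rule triangular[where v = "\<lambda>i k. of_nat ((n + i - k) choose n)"])
  fix i assume "i \<le> n"
  have "poly (\<Sum>k\<le>n. smult (c k) (binom_poly n k)) (of_nat (i+1)) = 0" using assms by simp
  then have "(\<Sum>k\<le>n. c k * poly (binom_poly n k) (of_nat (i+1))) = 0"
    by (simp only: poly_sum poly_smult)
  moreover have "(\<Sum>k\<le>n. c k * poly (binom_poly n k) (of_nat (i+1))) =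
     (\<Sum>k\<le>n. c k * of_nat ((n + i - k) choose n))"
    by (rule sum.cong) (simp_all only: binom_eval atMost_iff)
  ultimately show "(\<Sum>k\<le>n. c k * of_nat ((n + i - k) choose n)) = 0"
    by simp
qed (use assms in \<open>auto simp: binomial_eq_0\<close>)

definition G :: "nat \<Rightarrow> complex \<Rightarrow> complex poly" where
  "G m a = smult (1 / fact m) (\<Prod>i<m. [:a - of_nat i, 1:])"

lemma G_pascal: "G (Suc m) a - G (Suc m) (a - 1) = G m (a - 1)"
proof -
  define Q where "Q = (\<Prod>i<m. [:a - 1 - of_nat i, 1:])"
  have 1: "(\<Prod>i<Suc m. [:a - of_nat i, 1:]) = [:a, 1:] * Q"
    unfolding Q_def prod.lessThan_Suc_shift by (simp add: algebra_simps)
  have 2: "(\<Prod>i<Suc m. [:a - 1 - of_nat i, 1:]) = Q * [:a - 1 - of_nat m, 1:]"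
    unfolding Q_def by simp
  have "[:a, 1:] * Q - Q * [:a - 1 - of_nat m, 1:] = ([:a, 1:] - [:a - 1 - of_nat m, 1:]) * Q"
    by (metis left_diff_distrib mult.commute)
  also have "[:a, 1:] - [:a - 1 - of_nat m, 1:] = [:of_nat (Suc m):]" by simp
  finally have 3: "[:a, 1:] * Q - Q * [:a - 1 - of_nat m, 1:] = smult (of_nat (Suc m)) Q"
    by simp
  have "G (Suc m) a - G (Suc m) (a - 1) = smult (1 / fact (Suc m)) (smult (of_nat (Suc m)) Q)"
    by (simp only: G_def 1 2 smult_diff_right[symmetric] 3)
  also have "\<dots> = smult (1 / fact m) Q"
  proof -
    have "1 / fact (Suc m) * of_nat (Suc m) = (1 / fact m :: complex)"
      by (simp only: fact_Suc of_nat_mult) (simp del: of_nat_Suc)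
    then show ?thesis by simp
  qed
  also have "\<dots> = G m (a - 1)" unfolding G_def Q_def by (simp add: algebra_simps)
  finally show ?thesis .
qed

lemma G_lead: "coeff (G m a) m = 1 / fact m" and G_deg: "degree (G m a) = m"
proof -
  have d: "degree (\<Prod>i<m. [:a - of_nat i, 1:]) = m"
    by (subst degree_prod_eq_sum_degree) auto
  have l: "lead_coeff (\<Prod>i<m. [:a - of_nat i, 1:]) = 1"
    by (simp add: lead_coeff_prod)
  show "coeff (G m a) m = 1 / fact m" using d l unfolding G_def by simp
  show "degree (G m a) = m" using d unfolding G_def by simp
qed

lemma smult_sum_right: "smult r (sum f A) = (\<Sum>x\<in>A. smult r (f x))"
  by (induction A rule: infinite_finite_induct) (auto simp: smult_add_right)

definition SP :: "nat \<Rightarrow> complex \<Rightarrow> complex poly set" where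
  "SP m a = {p. \<exists>c. p = (\<Sum>j\<le>m. smult (c j) (G m (a - of_nat j)))}"

lemma SP_add: "p \<in> SP m a \<Longrightarrow> q \<in> SP m a \<Longrightarrow> p + q \<in> SP m a"
  unfolding SP_def
proof safe
  fix c d show "\<exists>e. (\<Sum>j\<le>m. smult (c j) (G m (a - of_nat j))) + (\<Sum>j\<le>m. smult (d j) (G m (a - of_nat j)))
     = (\<Sum>j\<le>m. smult (e j) (G m (a - of_nat j)))"
    by (rule exI[of _ "\<lambda>j. c j + d j"]) (simp add: sum.distrib smult_add_left)
qed

lemma SP_smult: "p \<in> SP m a \<Longrightarrow> smult r p \<in> SP m a"
  unfolding SP_def
proof safe
  fix c show "\<exists>e. smult r (\<Sum>j\<le>m. smult (c j) (G m (a - of_nat j)))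
     = (\<Sum>j\<le>m. smult (e j) (G m (a - of_nat j)))"
    by (rule exI[of _ "\<lambda>j. r * c j"]) (simp add: smult_sum_right)
qed

lemma SP_diff: "p \<in> SP m a \<Longrightarrow> q \<in> SP m a \<Longrightarrow> p - q \<in> SP m a"
  using SP_add[of p m a "smult (-1) q"] SP_smult[of q m a "-1"] by simp

lemma SP_gen: "j \<le> m \<Longrightarrow> G m (a - of_nat j) \<in> SP m a"
  unfolding SP_def
proof safe
  assume "j \<le> m"
  show "\<exists>c. G m (a - of_nat j) = (\<Sum>i\<le>m. smult (c i) (G m (a - of_nat i)))"
  proof (rule exI[of _ "\<lambda>i. if i = j then 1 else 0"])
    have "(\<Sum>i\<le>m. smult (if i = j then 1 else 0) (G m (a - of_nat i))) =
          (\<Sum>i\<le>m. if i = j then G m (a - of_nat i) else 0)"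
      by (rule sum.cong) auto
    also have "\<dots> = G m (a - of_nat j)" using \<open>j \<le> m\<close> by (simp add: sum.delta)
    finally show "G m (a - of_nat j) = (\<Sum>i\<le>m. smult (if i = j then 1 else 0) (G m (a - of_nat i)))" ..
  qed
qed

lemma SP_sum: "finite A \<Longrightarrow> (\<And>x. x \<in> A \<Longrightarrow> f x \<in> SP m a) \<Longrightarrow> sum f A \<in> SP m a"
proof (induction A rule: finite_induct)
  case empty
  have "smult 0 (G m a) \<in> SP m a" by (rule SP_smult[OF SP_gen[of 0 m a, simplified]])
  then show ?case by simp
next
  case (insert x F) then show ?case by (simp add: SP_add)
qed

lemma SP_exists: "degree p \<le> m \<Longrightarrow> p \<in> SP m a"
proof (induction m arbitrary: p a)
  case 0
  have "p = smult (coeff p 0) (G 0 (a - of_nat 0))"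
    using 0 degree_0_id[of p] by (simp add: G_def)
  then show ?case by (metis SP_smult SP_gen le_refl)
next
  case (Suc m)
  define r where "r = coeff p (Suc m) * fact (Suc m)"
  define q where "q = p - smult r (G (Suc m) a)"
  have "degree q \<le> Suc m" unfolding q_def using Suc.prems G_deg
    by (metis degree_diff_le degree_smult_le order_trans)
  moreover have "coeff q (Suc m) = 0" unfolding q_def r_def
  proof -
    have "(fact (Suc m) :: complex) \<noteq> 0" by (rule fact_nonzero)
    then show "coeff (p - smult (coeff p (Suc m) * fact (Suc m)) (G (Suc m) a)) (Suc m) = 0"
      by (simp add: G_lead del: fact_Suc)
  qed
  ultimately have "degree q \<le> m"
    by (intro degree_le) (metis Suc_lessI coeff_eq_0 le_less_trans)
  then have "q \<in> SP m (a - 1)" by (rule Suc.IH)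
  then obtain d where d: "q = (\<Sum>j\<le>m. smult (d j) (G m (a - 1 - of_nat j)))"
    unfolding SP_def by auto
  have "G m (a - 1 - of_nat j) \<in> SP (Suc m) a" if "j \<le> m" for j
  proof -
    have "G m (a - 1 - of_nat j) = G (Suc m) (a - of_nat j) - G (Suc m) (a - of_nat (Suc j))"
      using G_pascal[of m "a - of_nat j"] by (simp add: algebra_simps)
    moreover have "G (Suc m) (a - of_nat j) \<in> SP (Suc m) a" using that by (intro SP_gen) simp
    moreover have "G (Suc m) (a - of_nat (Suc j)) \<in> SP (Suc m) a" using that by (intro SP_gen) simp
    ultimately show ?thesis by (simp only: SP_diff)
  qed
  then have "q \<in> SP (Suc m) a" unfolding d
    by (intro SP_sum) (auto intro: SP_smult)
  moreover have "smult r (G (Suc m) a) \<in> SP (Suc m) a"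
    using SP_smult[OF SP_gen[of 0 "Suc m" a]] by simp
  ultimately have "q + smult r (G (Suc m) a) \<in> SP (Suc m) a" by (rule SP_add)
  then show ?case unfolding q_def by simp
qed

lemma sum_smult_diff:
  fixes c d :: "nat \<Rightarrow> complex"
  shows "(\<Sum>k\<le>n. smult (c k) (f k)) - (\<Sum>k\<le>n. smult (d k) (f k)) = (\<Sum>k\<le>n. smult (c k - d k) (f k))"
  by (simp only: smult_diff_left sum_subtractf)

lemma S2_eq:
  assumes "P n = (\<Sum>k\<le>n. smult (s k) (falling_poly k))" "\<forall>k>n. s k = 0"
  shows "S2 P n = s"
  unfolding S2_def
proof (rule the1_equality)
  show "(\<forall>k>n. s k = 0) \<and> P n = (\<Sum>k\<le>n. smult (s k) (falling_poly k))" using assms by simp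
  show "\<exists>!c. (\<forall>k>n. c k = 0) \<and> P n = (\<Sum>k\<le>n. smult (c k) (falling_poly k))"
  proof (rule ex1I[of _ s])
    fix d assume d: "(\<forall>k>n. d k = 0) \<and> P n = (\<Sum>k\<le>n. smult (d k) (falling_poly k))"
    show "d = s"
    proof
      fix k show "d k = s k"
      proof (cases "k \<le> n")
        case True
        have "(\<Sum>k\<le>n. smult (d k - s k) (falling_poly k)) = 0"
          using d assms by (simp add: sum_smult_diff[symmetric])
        from falling_unique[OF this True] show ?thesis by simp
      qed (use d assms in auto)
    qed
  qed (use assms in auto)
qed

lemma eulerA_eq:
  assumes "P n = (\<Sum>k\<le>n. smult (s k) (binom_poly n k))" "\<forall>k>n. s k = 0"
  shows "eulerA P n = s"
  unfolding eulerA_def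
proof (rule the1_equality)
  show "(\<forall>k>n. s k = 0) \<and> P n = (\<Sum>k\<le>n. smult (s k) (binom_poly n k))" using assms by simp
  show "\<exists>!c. (\<forall>k>n. c k = 0) \<and> P n = (\<Sum>k\<le>n. smult (c k) (binom_poly n k))"
  proof (rule ex1I[of _ s])
    fix d assume d: "(\<forall>k>n. d k = 0) \<and> P n = (\<Sum>k\<le>n. smult (d k) (binom_poly n k))"
    show "d = s"
    proof
      fix k show "d k = s k"
      proof (cases "k \<le> n")
        case True
        have "(\<Sum>k\<le>n. smult (d k - s k) (binom_poly n k)) = 0"
          using d assms by (simp add: sum_smult_diff[symmetric])
        from binom_unique[OF this True] show ?thesis by simp
      qed (use d assms in auto)
    qed
  qed (use assms in auto)
qed

lemma binom_G: "1 \<le> n \<Longrightarrow> binom_poly n j = G n (of_nat (n-1) - of_nat j)"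
  unfolding binom_poly_def G_def
  by (intro arg_cong[where f = "smult _"] prod.cong) (auto simp: of_nat_diff)

lemma binom_vdm:
  assumes "j < n"
  shows "binom_poly n j = (\<Sum>k\<le>n. smult (of_nat ((n-j-1) choose (n-k)) / fact k) (falling_poly k))"
proof (rule poly_ext)
  fix x :: complex
  have e: "(of_int (int n - int j - 1) :: complex) = of_nat (n - j - 1)"
    using assms by (simp add: of_nat_diff)
  have "poly (\<Sum>k\<le>n. smult (of_nat ((n-j-1) choose (n-k)) / fact k) (falling_poly k)) x
      = (\<Sum>k\<le>n. (of_nat (n-j-1) gchoose (n-k)) * (x gchoose k))"
    by (simp add: poly_sum poly_falling binomial_gbinomial)
  also have "\<dots> = (x + of_nat (n-j-1)) gchoose n"
    using gbinomial_Vandermonde[of x "of_nat (n-j-1)" n] by (simp add: atMost_atLeast0 mult.commute)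
  finally show "poly (binom_poly n j) x =
     poly (\<Sum>k\<le>n. smult (of_nat ((n-j-1) choose (n-k)) / fact k) (falling_poly k)) x"
    unfolding poly_binom e by simp
qed

lemma binom_at0: "j < n \<Longrightarrow> poly (binom_poly n j) 0 = 0"
proof -
  assume "j < n"
  then have e: "(of_int (int n - int j - 1) :: complex) = of_nat (n - j - 1)"
    by (simp add: of_nat_diff)
  have "poly (binom_poly n j) 0 = (0 + of_int (int n - int j - 1)) gchoose n" by (rule poly_binom)
  also have "\<dots> = of_nat (n-j-1) gchoose n" by (simp only: e add_0_left)
  also have "\<dots> = of_nat ((n-j-1) choose n)" by (rule binomial_gbinomial[symmetric])
  also have "\<dots> = 0" using \<open>j < n\<close> by (simp add: binomial_eq_0)
  finally show ?thesis .
qed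

lemma binom_at0n: "poly (binom_poly n n) 0 \<noteq> 0"
  using gbinomial_minus[of "1::complex" n] by (simp add: poly_binom flip: binomial_gbinomial)


theorem theorem3p3:
  fixes P :: "nat \<Rightarrow> complex poly" and n k :: nat
  assumes "\<And>m. degree (P m) = m"
    and "P 0 = 1"
    and "\<And>m. m \<ge> 1 \<Longrightarrow> poly (P m) 0 = 0"
    and "1 \<le> n" and "1 \<le> k" and "k \<le> n"
  shows "S2 P n k = (1 / fact k) * (\<Sum>j=1..k. of_nat ((n - j) choose (k - j)) * eulerA P n (j - 1))"
proof -
  have "P n \<in> SP n (of_nat (n-1))" by (rule SP_exists) (simp add: assms(1))
  then obtain c where c: "P n = (\<Sum>j\<le>n. smult (c j) (G n (of_nat (n-1) - of_nat j)))"
    unfolding SP_def by auto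
  define a where "a j = (if j \<le> n then c j else 0)" for j
  have Pa: "P n = (\<Sum>j\<le>n. smult (a j) (binom_poly n j))"
    unfolding c by (intro sum.cong refl) (simp add: a_def binom_G[OF assms(4)])
  have EA: "eulerA P n = a" using eulerA_eq[of P n a] Pa by (simp add: a_def)
  have an: "a n = 0"
  proof -
    have "0 = poly (P n) 0" using assms(3,4) by simp
    also have "\<dots> = (\<Sum>j\<le>n. a j * poly (binom_poly n j) 0)"
      by (subst Pa) (simp only: poly_sum poly_smult)
    also have "\<dots> = (\<Sum>j\<in>{n}. a j * poly (binom_poly n j) 0)"
      by (rule sum.mono_neutral_right) (auto simp: binom_at0)
    finally show ?thesis using binom_at0n[of n] by simp
  qed
  define w where "w j k = of_nat ((n-j-1) choose (n-k)) / (fact k :: complex)" for j k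
  have "P n = (\<Sum>j<n. smult (a j) (binom_poly n j))"
    unfolding Pa using an by (simp add: lessThan_Suc_atMost[symmetric])
  also have "\<dots> = (\<Sum>j<n. smult (a j) (\<Sum>k\<le>n. smult (w j k) (falling_poly k)))"
    by (intro sum.cong refl) (simp add: binom_vdm w_def)
  also have "\<dots> = (\<Sum>j<n. \<Sum>k\<le>n. smult (a j * w j k) (falling_poly k))"
    by (simp add: smult_sum_right)
  also have "\<dots> = (\<Sum>k\<le>n. \<Sum>j<n. smult (a j * w j k) (falling_poly k))" by (rule sum.swap)
  also have "\<dots> = (\<Sum>k\<le>n. smult (\<Sum>j<n. a j * w j k) (falling_poly k))" by (simp add: smult_sum)
  finally have Ps: "P n = (\<Sum>k\<le>n. smult (\<Sum>j<n. a j * w j k) (falling_poly k))" .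
  define s where "s k = (if k \<le> n then \<Sum>j<n. a j * w j k else 0)" for k
  have "P n = (\<Sum>k\<le>n. smult (s k) (falling_poly k))"
    unfolding Ps by (intro sum.cong refl) (simp add: s_def)
  then have S: "S2 P n = s" using S2_eq[of P n s] by (simp add: s_def)
  have "S2 P n k = (\<Sum>j<n. a j * w j k)" using assms(6) by (simp add: S s_def)
  also have "\<dots> = (\<Sum>j<k. a j * w j k)"
  proof (rule sum.mono_neutral_right)
    show "\<forall>j\<in>{..<n} - {..<k}. a j * w j k = 0"
      using assms(6) by (auto simp: w_def binomial_eq_0)
  qed (use assms(6) in auto)
  also have "\<dots> = (1 / fact k) * (\<Sum>j<k. of_nat ((n - Suc j) choose (k - Suc j)) * a j)"
    unfolding sum_distrib_left
  proof (intro sum.cong refl)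
    fix j assume "j \<in> {..<k}"
    then have "j < k" by simp
    then have "(n - Suc j) choose (k - Suc j) = (n - j - 1) choose (n - k)"
      using assms(6) binomial_symmetric[of "k - Suc j" "n - Suc j"] by simp
    then show "a j * w j k = 1 / fact k * (of_nat ((n - Suc j) choose (k - Suc j)) * a j)"
      by (simp add: w_def)
  qed
  also have "\<dots> = (1 / fact k) * (\<Sum>j=1..k. of_nat ((n - j) choose (k - j)) * a (j - 1))"
    by (simp only: One_nat_def sum.atLeast1_atMost_eq diff_Suc_Suc minus_nat.diff_0)
  finally show ?thesis unfolding EA .
qed

end
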